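(* Let $p$ be a prime, $q$ a power of $p$, $U\in\mathcal A_m^*$, $\sigma:\mathcal A_m\to\mathcal A_m^*$ a $p$-uniform morphism and $\varphi:\mathcal A_m\to\mathbb{F}_q$ a coding. Let $t\in\mathbb{N}^*$, $r=p^t$, and $\alpha\in\mathbb{F}_r$ (with $\mathbb{F}_q$ and $\mathbb{F}_r$ inside a common algebraic closure of $\mathbb{F}_p$). Then the sequence $\big(P_{\varphi(\sigma^n(U))}(\alpha)\big)_{n\ge0}$ is ultimately periodic.
   Context: $\mathcal A_m=\{0,\dots,m-1\}$. A $p$-uniform morphism sends each letter to a word of length $p$ and acts on words by concatenation; a coding is a letter-to-letter map applied letterwise. For a word $W=w_0\cdots w_{s-1}$ over $\mathbb{F}_q$, $P_W(T)=\sum_{j=0}^{s-1}w_{s-1-j}T^j\in\mathbb{F}_q[T]$. *)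

theory Defs
  imports "HOL-Computational_Algebra.Polynomial"
begin

text \<open>Words over A_m are lists of naturals with all letters below m.
  A morphism sigma acts on words by concatenation.\<close>
definition apply_morphism :: "(nat \<Rightarrow> nat list) \<Rightarrow> nat list \<Rightarrow> nat list" where
  "apply_morphism \<sigma> w = concat (map \<sigma> w)"

definition p_uniform_morphism :: "nat \<Rightarrow> nat \<Rightarrow> (nat \<Rightarrow> nat list) \<Rightarrow> bool" where
  "p_uniform_morphism m p \<sigma> \<longleftrightarrow>
     (\<forall>a<m. length (\<sigma> a) = p \<and> set (\<sigma> a) \<subseteq> {..<m})"

text \<open>P_W(T) = sum_j w_{s-1-j} T^j, i.e. the coefficient list is the reversed word.\<close>
definition word_poly :: "'a::comm_semiring_0 list \<Rightarrow> 'a poly" where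
  "word_poly W = Poly (rev W)"

definition ultimately_periodic :: "(nat \<Rightarrow> 'a) \<Rightarrow> bool" where
  "ultimately_periodic f \<longleftrightarrow> (\<exists>N k. k > 0 \<and> (\<forall>n\<ge>N. f (n + k) = f n))"

end

theory Submission
  imports Defs "HOL-Computational_Algebra.Primes"
begin

fun Gv :: "nat list \<Rightarrow> (nat \<Rightarrow> 'k::comm_ring_1) \<Rightarrow> 'k \<Rightarrow> 'k" where
  "Gv [] c b = 0"
| "Gv (a#w) c b = c a * b ^ length w + Gv w c b"

lemma Gv_cong: "(\<forall>a\<in>set w. c a = c' a) \<Longrightarrow> Gv w c b = Gv w c' b"
  by (induct w) auto

lemma L_append: "(apply_morphism \<sigma> ^^ n) (xs @ ys) = (apply_morphism \<sigma> ^^ n) xs @ (apply_morphism \<sigma> ^^ n) ys"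
  by (induct n) (auto simp: apply_morphism_def)

lemma L_Nil [simp]: "(apply_morphism \<sigma> ^^ n) [] = []"
  by (induct n) (auto simp: apply_morphism_def)

lemma L_Suc_single: "(apply_morphism \<sigma> ^^ Suc n) [a] = (apply_morphism \<sigma> ^^ n) (\<sigma> a)"
  by (simp add: funpow_Suc_right apply_morphism_def del: funpow.simps)

lemma L_set: "p_uniform_morphism m p \<sigma> \<Longrightarrow> set w \<subseteq> {..<m} \<Longrightarrow> set ((apply_morphism \<sigma> ^^ n) w) \<subseteq> {..<m}"
proof (induct n)
  case 0 then show ?case by simp
next
  case (Suc n)
  then show ?case unfolding p_uniform_morphism_def
    by (auto simp: apply_morphism_def)
qed

lemma len_apply: "p_uniform_morphism m p \<sigma> \<Longrightarrow> set w \<subseteq> {..<m} \<Longrightarrow> length (apply_morphism \<sigma> w) = p * length w"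
proof (induct w)
  case Nil then show ?case by (simp add: apply_morphism_def)
next
  case (Cons a w)
  then show ?case unfolding p_uniform_morphism_def by (auto simp: apply_morphism_def)
qed

lemma L_len: "p_uniform_morphism m p \<sigma> \<Longrightarrow> set w \<subseteq> {..<m} \<Longrightarrow> length ((apply_morphism \<sigma> ^^ n) w) = p ^ n * length w"
proof (induct n arbitrary: w)
  case 0 then show ?case by simp
next
  case (Suc n)
  have "set (apply_morphism \<sigma> w) \<subseteq> {..<m}" using L_set[OF Suc(2,3), of 1] by simp
  then have "length ((apply_morphism \<sigma> ^^ n) (apply_morphism \<sigma> w)) = p ^ n * (p * length w)"
    using Suc len_apply by metis
  then show ?case by (simp add: funpow_Suc_right del: funpow.simps)
qed

lemma word_poly_append: "poly (word_poly (xs @ ys)) x = poly (word_poly xs) x * x ^ length ys + poly (word_poly ys) (x::'a::comm_ring_1)"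
  by (simp add: word_poly_def Poly_append poly_monom)

lemma eval_Gv:
  fixes \<phi> :: "nat \<Rightarrow> 'k::comm_ring_1" and \<sigma> :: "nat \<Rightarrow> nat list" and p m n :: nat and \<alpha> :: 'k
  assumes "p_uniform_morphism m p \<sigma>" "set w \<subseteq> {..<m}"
  shows "poly (word_poly (map \<phi> ((apply_morphism \<sigma> ^^ n) w))) \<alpha>
     = Gv w (\<lambda>a. poly (word_poly (map \<phi> ((apply_morphism \<sigma> ^^ n) [a]))) \<alpha>) (\<alpha> ^ (p ^ n))"
  using assms(2)
proof (induct w)
  case Nil then show ?case by (simp add: word_poly_def)
next
  case (Cons a w)
  have e: "(apply_morphism \<sigma> ^^ n) (a # w) = (apply_morphism \<sigma> ^^ n) [a] @ (apply_morphism \<sigma> ^^ n) w"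
    using L_append[where \<sigma>=\<sigma> and n=n and xs="[a]" and ys=w] by simp
  have l: "length ((apply_morphism \<sigma> ^^ n) w) = p ^ n * length w"
    using L_len[OF assms(1)] Cons by auto
  show ?case using Cons by (simp add: e word_poly_append l power_mult)
qed

lemma pow_iter: "(x::'a::monoid_mult) ^ b = x \<Longrightarrow> x ^ (b ^ k) = x"
proof (induct k)
  case 0 then show ?case by simp
next
  case (Suc k)
  have "x ^ (b ^ Suc k) = (x ^ b) ^ (b ^ k)" by (simp add: power_mult)
  then show ?case using Suc by simp
qed

lemma poly_in_S:
  assumes "0 \<in> S" "\<And>x y. x \<in> S \<Longrightarrow> y \<in> S \<Longrightarrow> x + y \<in> S" "\<And>x y. x \<in> S \<Longrightarrow> y \<in> S \<Longrightarrow> x * y \<in> S"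
    "set cs \<subseteq> S" "x \<in> S"
  shows "poly (Poly cs) x \<in> S"
  using assms(4) by (induct cs) (auto intro: assms)

lemma finite_fixed:
  assumes "n \<ge> 2"
  shows "finite {x::'k::field. x ^ n = x}"
proof -
  let ?P = "monom (1::'k) n - monom 1 1"
  have "coeff ?P n = 1" using assms by (simp add: coeff_monom)
  then have "?P \<noteq> 0" by (metis coeff_0 zero_neq_one)
  then have "finite {x. poly ?P x = 0}" by (rule poly_roots_finite)
  moreover have "{x::'k. x ^ n = x} = {x. poly ?P x = 0}" by (auto simp: poly_monom)
  ultimately show ?thesis by simp
qed

lemma ult_periodic_state:
  fixes s :: "nat \<Rightarrow> 'b"
  assumes fin: "finite A" and inA: "\<And>n. s n \<in> A" and step: "\<And>n. s (Suc n) = F (s n)"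
  shows "\<exists>N k. k > 0 \<and> (\<forall>n\<ge>N. s (n + k) = s n)"
proof -
  have "\<not> inj s"
  proof
    assume "inj s"
    then have "finite (UNIV::nat set)"
      using finite_imageD[of s UNIV] finite_subset[of "range s" A] fin inA by (auto simp: inj_on_def)
    then show False by simp
  qed
  then obtain i j where ij: "i \<noteq> j" "s i = s j" by (auto simp: inj_on_def)
  then obtain i j where ij: "i < j" "s i = s j"
    by (metis linorder_neqE_nat)
  have "\<forall>n\<ge>i. s (n + (j - i)) = s n"
  proof (intro allI impI)
    fix n assume "i \<le> n"
    then show "s (n + (j - i)) = s n"
    proof (induct n rule: dec_induct)
      case base then show ?case using ij by simp
    next
      case (step n) then show ?case using assms(3) by (metis add_Suc)
    qed
  qed
  then show ?thesis using ij by (intro exI[of _ i] exI[of _ "j - i"]) auto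
qed

theorem proposition4p15:
  fixes p q m t :: nat
    and U :: "nat list"
    and \<sigma> :: "nat \<Rightarrow> nat list"
    and \<phi> :: "nat \<Rightarrow> 'k::field"
    and \<alpha> :: "'k"
  assumes "prime p"
    and "CHAR('k) = p"
    and "\<exists>e\<ge>1. q = p ^ e"
    and "set U \<subseteq> {..<m}"
    and "p_uniform_morphism m p \<sigma>"
    and "\<forall>a<m. \<phi> a ^ q = \<phi> a"
    and "t \<ge> 1"
    and "\<alpha> ^ (p ^ t) = \<alpha>"
  shows "ultimately_periodic
           (\<lambda>n. poly (word_poly (map \<phi> ((apply_morphism \<sigma> ^^ n) U))) \<alpha>)"
proof -
  obtain e where e: "e \<ge> 1" "q = p ^ e" using assms(3) by auto
  define M where "M = p ^ (e * t)"
  define S where "S = {x::'k. x ^ M = x}"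
  have p2: "p \<ge> 2" using assms(1) prime_ge_2_nat by blast
  have "e * t \<ge> 1" using e assms(7) by simp
  then have "p ^ 1 \<le> p ^ (e * t)" using p2 by (intro power_increasing) auto
  then have M2: "M \<ge> 2" unfolding M_def using p2 by simp
  have finS: "finite S" unfolding S_def using finite_fixed[OF M2] .
  have S0: "0 \<in> S" unfolding S_def using M2 by simp
  have Sadd: "x + y \<in> S" if "x \<in> S" "y \<in> S" for x y
  proof -
    have "(x + y) ^ M = x ^ M + y ^ M"
    proof (rule freshmans_dream')
      show "prime CHAR('k)" using assms(1,2) by simp
      show "M = CHAR('k) ^ (e * t)" using assms(2) M_def by simp
    qed
    then show ?thesis using that unfolding S_def by simp
  qed
  have Smul: "x * y \<in> S" if "x \<in> S" "y \<in> S" for x y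
    using that unfolding S_def by (simp add: power_mult_distrib)
  have Sphi: "\<phi> a \<in> S" if "a < m" for a
  proof -
    have "\<phi> a ^ (q ^ t) = \<phi> a" using pow_iter assms(6) that by blast
    moreover have "M = q ^ t" unfolding M_def using e by (simp add: power_mult)
    ultimately show ?thesis unfolding S_def by simp
  qed
  have Salpha: "\<alpha> \<in> S"
  proof -
    have "\<alpha> ^ ((p ^ t) ^ e) = \<alpha>" using pow_iter assms(8) by blast
    moreover have "(p ^ t) ^ e = M" unfolding M_def by (simp only: power_mult[symmetric] mult.commute)
    ultimately show ?thesis unfolding S_def by simp
  qed
  have Spow: "x ^ k \<in> S" if "x \<in> S" for x k
  proof -
    have "(x ^ k) ^ M = (x ^ M) ^ k" by (simp only: power_mult[symmetric] mult.commute)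
    then show ?thesis using that unfolding S_def by simp
  qed
  define c where "c n a = poly (word_poly (map \<phi> ((apply_morphism \<sigma> ^^ n) [a]))) \<alpha>" for n a
  have cS: "c n a \<in> S" if "a < m" for n a
  proof -
    have "set ((apply_morphism \<sigma> ^^ n) [a]) \<subseteq> {..<m}" using L_set[OF assms(5)] that by auto
    then have "set (rev (map \<phi> ((apply_morphism \<sigma> ^^ n) [a]))) \<subseteq> S" using Sphi by auto
    then show ?thesis unfolding c_def word_poly_def
      using poly_in_S[OF S0 Sadd Smul _ Salpha] by blast
  qed
  have c_Suc: "c (Suc n) a = Gv (\<sigma> a) (c n) (\<alpha> ^ (p ^ n))" if "a < m" for n a
  proof -
    have "set (\<sigma> a) \<subseteq> {..<m}" using assms(5) that unfolding p_uniform_morphism_def by auto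
    then show ?thesis unfolding c_def L_Suc_single
      using eval_Gv[OF assms(5)] by blast
  qed
  define s where "s n = (map (c n) [0..<m], \<alpha> ^ (p ^ n))" for n
  define F where "F = (\<lambda>(cs::'k list, b::'k). (map (\<lambda>a. Gv (\<sigma> a) (\<lambda>i. cs ! i) b) [0..<m], b ^ p))"
  have step: "s (Suc n) = F (s n)" for n
  proof -
    have "Gv (\<sigma> a) (\<lambda>i. map (c n) [0..<m] ! i) (\<alpha> ^ p ^ n) = c (Suc n) a" if "a < m" for a
    proof -
      have "set (\<sigma> a) \<subseteq> {..<m}" using assms(5) that unfolding p_uniform_morphism_def by auto
      then have "Gv (\<sigma> a) (\<lambda>i. map (c n) [0..<m] ! i) (\<alpha> ^ p ^ n) = Gv (\<sigma> a) (c n) (\<alpha> ^ p ^ n)"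
        by (intro Gv_cong) auto
      then show ?thesis using c_Suc that by simp
    qed
    moreover have "\<alpha> ^ p ^ Suc n = (\<alpha> ^ p ^ n) ^ p"
      by (simp only: power_Suc2 power_mult)
    ultimately show ?thesis unfolding s_def F_def
      by (simp del: power_Suc)
  qed
  define A where "A = {cs. set cs \<subseteq> S \<and> length cs = m} \<times> S"
  have finA: "finite A" unfolding A_def using finS by (simp add: finite_lists_length_eq)
  have inA: "s n \<in> A" for n unfolding A_def s_def using cS Spow[OF Salpha] by auto
  obtain N k where Nk: "k > 0" "\<forall>n\<ge>N. s (n + k) = s n"
    using ult_periodic_state[of A s F, OF finA inA step] by blast
  have val: "poly (word_poly (map \<phi> ((apply_morphism \<sigma> ^^ n) U))) \<alpha>
      = Gv U (\<lambda>i. fst (s n) ! i) (snd (s n))" for n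
  proof -
    have "Gv U (\<lambda>i. fst (s n) ! i) (snd (s n)) = Gv U (c n) (\<alpha> ^ (p ^ n))"
      unfolding s_def fst_conv snd_conv using assms(4) by (intro Gv_cong) auto
    then show ?thesis using eval_Gv[OF assms(5,4)] unfolding c_def by simp
  qed
  show ?thesis unfolding ultimately_periodic_def val
    using Nk by (intro exI[of _ N] exI[of _ k]) auto
qed

end
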